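(* Let $N\ge 1$ and let $f:\{0,1\}^N\to\{-1,1\}$ be a Boolean function. Let $0\le\epsilon$ and suppose a quantum query (black-box) algorithm computes $f$ with error probability at most $\epsilon$ using $T$ queries. Then $$T\;\ge\;\frac{1-2\sqrt{\epsilon}}{2}\,\rho_f\,N\;=\;\frac{1-2\sqrt{\epsilon}}{2}\,\bar S_f .$$
   Context: Quantum query model: the input $x=(x_0,\dots,x_{N-1})\in\{0,1\}^N$ is accessible only through an oracle. The algorithm works in a Hilbert space with basis states $|i\rangle_I|a\rangle_A|w\rangle_W|r\rangle_R$ (index register $i\in\{0,\dots,N-1\}$, one-bit answer register $a$, a working register $w$ of fixed size, and a one-bit result register $r$). An algorithm with $T$ queries is a sequence $U_0, O_x, U_1, O_x,\dots,O_x,U_T$ of unitaries, where the $U_j$ are arbitrary unitaries independent of $x$ and the query gate is $O_x:|i\rangle|a\rangle|w\rangle|r\rangle\mapsto|i\rangle|a\oplus x_i\rangle|w\rangle|r\rangle$. It starts from a fixed basis state, and at the end the result register is measured. It computes $f$ with error probability at most $\epsilon$ if for every $x\in\{0,1\}^N$ the measured result equals $f(x)$ with probability at least $1-\epsilon$. For $x\in\{0,1\}^N$, $e_i$ is the string with a single $1$ in position $i$ and $+$ is bitwise XOR. The influence of variable $i$ is $\mathrm{Inf}_i(f)=\Pr_x[f(x)\ne f(x+e_i)]$ with $x$ uniform in $\{0,1\}^N$; the average influence is $\rho_f=\frac1N\sum_{i=0}^{N-1}\mathrm{Inf}_i(f)$. The sensitivity of $f$ at $x$ is $S_f(x)=|\{i: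 f(x)\ne f(x+e_i)\}|$, and the average sensitivity is $\bar S_f=E_x[S_f(x)]$ for uniform $x$ (so $\bar S_f=\rho_f N$). *)

theory Defs
  imports Complex_Main
begin

text \<open>Basis states |i,a,w,r> encoded as tuples (i,a,w,r) of naturals:
  index i < N, answer bit a < 2, working register w < M, result bit r < 2.\<close>

type_synonym basis = "nat \<times> nat \<times> nat \<times> nat"
type_synonym qstate = "basis \<Rightarrow> complex"
type_synonym qop = "basis \<Rightarrow> basis \<Rightarrow> complex"

definition basis_set :: "nat \<Rightarrow> nat \<Rightarrow> basis set" where
  "basis_set N M = {(i,a,w,r). i < N \<and> a < 2 \<and> w < M \<and> r < 2}"

definition apply_op :: "nat \<Rightarrow> nat \<Rightarrow> qop \<Rightarrow> qstate \<Rightarrow> qstate" where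
  "apply_op N M U \<psi> = (\<lambda>b. \<Sum>c\<in>basis_set N M. U b c * \<psi> c)"

definition unitary_op :: "nat \<Rightarrow> nat \<Rightarrow> qop \<Rightarrow> bool" where
  "unitary_op N M U \<longleftrightarrow>
     (\<forall>b\<in>basis_set N M. \<forall>c\<in>basis_set N M.
        (\<Sum>d\<in>basis_set N M. cnj (U d b) * U d c) = (if b = c then 1 else 0))"

definition query :: "(nat \<Rightarrow> bool) \<Rightarrow> qstate \<Rightarrow> qstate" where
  "query x \<psi> = (\<lambda>(i,a,w,r). \<psi> (i, if x i then 1 - a else a, w, r))"

text \<open>Run U_0, O_x, U_1, O_x, ..., O_x, U_T given as the list [U_0,...,U_T].\<close>
fun run :: "nat \<Rightarrow> nat \<Rightarrow> qop list \<Rightarrow> (nat \<Rightarrow> bool) \<Rightarrow> qstate \<Rightarrow> qstate" where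
  "run N M [] x \<psi> = \<psi>"
| "run N M [U] x \<psi> = apply_op N M U \<psi>"
| "run N M (U # V # Us) x \<psi> = run N M (V # Us) x (query x (apply_op N M U \<psi>))"

definition basis_state :: "basis \<Rightarrow> qstate" where
  "basis_state b0 = (\<lambda>b. if b = b0 then 1 else 0)"

definition prob_result :: "nat \<Rightarrow> nat \<Rightarrow> qop list \<Rightarrow> basis \<Rightarrow> (nat \<Rightarrow> bool) \<Rightarrow> nat \<Rightarrow> real" where
  "prob_result N M Us b0 x v =
     (\<Sum>b\<in>{b\<in>basis_set N M. snd (snd (snd b)) = v}. (cmod (run N M Us x (basis_state b0) b))^2)"

text \<open>Inputs x in {0,1}^N, represented as bit functions vanishing from N on.\<close>
definition cube :: "nat \<Rightarrow> (nat \<Rightarrow> bool) set" where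
  "cube N = {x. \<forall>i\<ge>N. \<not> x i}"

text \<open>Result bit r encodes the output value (-1)^r in {-1,1}.\<close>
definition computes_with_error ::
  "nat \<Rightarrow> nat \<Rightarrow> qop list \<Rightarrow> basis \<Rightarrow> ((nat \<Rightarrow> bool) \<Rightarrow> int) \<Rightarrow> real \<Rightarrow> bool" where
  "computes_with_error N M Us b0 f \<epsilon> \<longleftrightarrow>
     (\<forall>x\<in>cube N. prob_result N M Us b0 x (if f x = 1 then 0 else 1) \<ge> 1 - \<epsilon>)"

definition flip :: "nat \<Rightarrow> (nat \<Rightarrow> bool) \<Rightarrow> (nat \<Rightarrow> bool)" where
  "flip i x = x(i := \<not> x i)"

definition influence :: "nat \<Rightarrow> ((nat \<Rightarrow> bool) \<Rightarrow> int) \<Rightarrow> nat \<Rightarrow> real" where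
  "influence N f i = real (card {x\<in>cube N. f x \<noteq> f (flip i x)}) / 2 ^ N"

definition avg_influence :: "nat \<Rightarrow> ((nat \<Rightarrow> bool) \<Rightarrow> int) \<Rightarrow> real" where
  "avg_influence N f = (\<Sum>i<N. influence N f i) / real N"

definition sensitivity :: "nat \<Rightarrow> ((nat \<Rightarrow> bool) \<Rightarrow> int) \<Rightarrow> (nat \<Rightarrow> bool) \<Rightarrow> nat" where
  "sensitivity N f x = card {i. i < N \<and> f x \<noteq> f (flip i x)}"

definition avg_sensitivity :: "nat \<Rightarrow> ((nat \<Rightarrow> bool) \<Rightarrow> int) \<Rightarrow> real" where
  "avg_sensitivity N f = (\<Sum>x\<in>cube N. real (sensitivity N f x)) / 2 ^ N"

end

theory Submission
  imports Defs
begin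


definition chi :: "nat set \<Rightarrow> (nat \<Rightarrow> bool) \<Rightarrow> complex" where
  "chi S x = (-1) ^ card {i\<in>S. x i}"

lemma cube_image: "cube N = (\<lambda>A i. i \<in> A) ` Pow {..<N}"
proof
  show "cube N \<subseteq> (\<lambda>A i. i \<in> A) ` Pow {..<N}"
  proof
    fix x assume "x \<in> cube N"
    then have "x = (\<lambda>i. i \<in> {i. x i})" "{i. x i} \<in> Pow {..<N}"
      by (auto simp: cube_def) (meson not_less)
    then show "x \<in> (\<lambda>A i. i \<in> A) ` Pow {..<N}" by blast
  qed
  show "(\<lambda>A i. i \<in> A) ` Pow {..<N} \<subseteq> cube N" by (auto simp: cube_def)
qed

lemma finite_cube: "finite (cube N)"
  by (simp add: cube_image)

lemma card_cube: "card (cube N) = 2 ^ N"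
proof -
  have "inj_on (\<lambda>A i. i \<in> A) (Pow {..<N})"
    by (rule inj_onI) (auto simp: fun_eq_iff)
  then show ?thesis by (simp add: cube_image card_image card_Pow)
qed

lemma flip_cube: "i < N \<Longrightarrow> x \<in> cube N \<Longrightarrow> flip i x \<in> cube N"
  by (auto simp: cube_def flip_def)

lemma flip_flip[simp]: "flip i (flip i x) = x"
  by (auto simp: flip_def fun_eq_iff)

lemma chi_flip:
  assumes "finite S"
  shows "chi S (flip i x) = (if i \<in> S then - chi S x else chi S x)"
proof (cases "i \<in> S")
  case True
  show ?thesis
  proof (cases "x i")
    case xi: True
    have e: "{j\<in>S. flip i x j} = {j\<in>S. x j} - {i}"
      using xi by (auto simp: flip_def)
    have "card {j\<in>S. x j} = Suc (card ({j\<in>S. x j} - {i}))"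
      using xi True assms by (metis (no_types, lifting) card_Suc_Diff1 finite_subset mem_Collect_eq subsetI)
    then show ?thesis using True unfolding chi_def e by simp
  next
    case xi: False
    have e: "{j\<in>S. flip i x j} = insert i {j\<in>S. x j}"
      using xi True by (auto simp: flip_def)
    have "card (insert i {j\<in>S. x j}) = Suc (card {j\<in>S. x j})"
      using xi assms by (simp add: card_insert_if)
    then show ?thesis using True unfolding chi_def e by simp
  qed
next
  case False
  then have "{j\<in>S. flip i x j} = {j\<in>S. x j}" by (auto simp: flip_def)
  then show ?thesis using False by (simp add: chi_def)
qed

lemma chi_mult:
  assumes "finite S" "finite T"
  shows "chi S x * chi T x = chi ((S - T) \<union> (T - S)) x"
proof -
  let ?A = "{i\<in>S. x i}" and ?B = "{i\<in>T. x i}"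
  have fA: "finite ?A" "finite ?B" using assms by auto
  have e: "{i\<in>(S - T) \<union> (T - S). x i} = (?A \<union> ?B) - (?A \<inter> ?B)" by auto
  have c1: "card ?A + card ?B = card (?A \<union> ?B) + card (?A \<inter> ?B)"
    using card_Un_Int fA by blast
  have c2: "card ((?A \<union> ?B) - (?A \<inter> ?B)) + card (?A \<inter> ?B) = card (?A \<union> ?B)"
    using fA by (metis (no_types, lifting) Int_lower1 card_Diff_subset_Int card_mono
        finite_Int finite_UnI le_add_diff_inverse2 Int_absorb2 le_supI1 order_refl card_Diff_subset)
  have "card ?A + card ?B = card ((?A \<union> ?B) - (?A \<inter> ?B)) + 2 * card (?A \<inter> ?B)"
    using c1 c2 by linarith
  have "chi S x * chi T x = (-1) ^ (card ?A + card ?B)" by (simp add: chi_def power_add)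
  also have "\<dots> = (-1) ^ (card ((?A \<union> ?B) - (?A \<inter> ?B)) + 2 * card (?A \<inter> ?B))"
    using c1 c2 by (metis (no_types, lifting) add.assoc mult_2)
  also have "\<dots> = (-1) ^ card ((?A \<union> ?B) - (?A \<inter> ?B))" by (simp add: power_add power_mult)
  finally show ?thesis unfolding chi_def e .
qed

lemma sum_chi:
  assumes "R \<subseteq> {..<N}"
  shows "(\<Sum>x\<in>cube N. chi R x) = (if R = {} then 2 ^ N else 0)"
proof (cases "R = {}")
  case True
  then show ?thesis by (simp add: chi_def card_cube)
next
  case False
  then obtain i where i: "i \<in> R" by blast
  then have iN: "i < N" using assms by auto
  have fR: "finite R" using assms finite_subset by blast
  have "(\<Sum>x\<in>cube N. chi R x) = (\<Sum>x\<in>cube N. chi R (flip i x))"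
    by (rule sum.reindex_bij_witness[of _ "flip i" "flip i"]) (auto simp: flip_cube iN)
  also have "\<dots> = - (\<Sum>x\<in>cube N. chi R x)"
    using i fR by (simp add: chi_flip sum_negf)
  finally show ?thesis using False by simp
qed

lemma orth:
  assumes "S \<subseteq> {..<N}" "T \<subseteq> {..<N}"
  shows "(\<Sum>x\<in>cube N. chi S x * chi T x) = (if S = T then 2 ^ N else 0)"
proof -
  have fin: "finite S" "finite T" using assms finite_subset by auto
  have "(\<Sum>x\<in>cube N. chi S x * chi T x) = (\<Sum>x\<in>cube N. chi ((S - T) \<union> (T - S)) x)"
    using fin by (simp add: chi_mult)
  also have "\<dots> = (if (S - T) \<union> (T - S) = {} then 2 ^ N else 0)"
    by (rule sum_chi) (use assms in auto)
  finally show ?thesis by auto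
qed

lemma chi_real: "cnj (chi S x) = chi S x"
  by (simp add: chi_def)

lemma parseval:
  fixes e :: "nat set \<Rightarrow> complex"
  shows "(\<Sum>x\<in>cube N. (\<Sum>S\<in>Pow {..<N}. e S * chi S x) * cnj (\<Sum>T\<in>Pow {..<N}. e T * chi T x))
     = 2 ^ N * (\<Sum>S\<in>Pow {..<N}. e S * cnj (e S))"
proof -
  have "(\<Sum>x\<in>cube N. (\<Sum>S\<in>Pow {..<N}. e S * chi S x) * cnj (\<Sum>T\<in>Pow {..<N}. e T * chi T x))
     = (\<Sum>x\<in>cube N. \<Sum>T\<in>Pow {..<N}. \<Sum>S\<in>Pow {..<N}. e S * cnj (e T) * (chi S x * chi T x))"
    by (simp add: sum_distrib_left sum_distrib_right chi_real mult_ac)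
  also have "\<dots> = (\<Sum>T\<in>Pow {..<N}. \<Sum>x\<in>cube N. \<Sum>S\<in>Pow {..<N}. e S * cnj (e T) * (chi S x * chi T x))"
    by (rule sum.swap)
  also have "\<dots> = (\<Sum>T\<in>Pow {..<N}. \<Sum>S\<in>Pow {..<N}. \<Sum>x\<in>cube N. e S * cnj (e T) * (chi S x * chi T x))"
    by (rule sum.cong[OF refl], rule sum.swap)
  also have "\<dots> = (\<Sum>T\<in>Pow {..<N}. \<Sum>S\<in>Pow {..<N}. e S * cnj (e T) * (\<Sum>x\<in>cube N. chi S x * chi T x))"
    by (simp add: sum_distrib_left)
  also have "\<dots> = (\<Sum>T\<in>Pow {..<N}. \<Sum>S\<in>Pow {..<N}. e S * cnj (e T) * (if S = T then 2 ^ N else 0))"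
    by (intro sum.cong refl) (simp add: orth)
  also have "\<dots> = 2 ^ N * (\<Sum>S\<in>Pow {..<N}. e S * cnj (e S))"
    by (simp add: sum_distrib_left mult_ac if_distrib sum.delta cong: if_cong)
  finally show ?thesis .
qed



definition degle :: "nat \<Rightarrow> nat \<Rightarrow> ((nat \<Rightarrow> bool) \<Rightarrow> complex) \<Rightarrow> bool" where
  "degle N d g \<longleftrightarrow> (\<exists>c. (\<forall>S. d < card S \<longrightarrow> c S = 0) \<and>
      (\<forall>x\<in>cube N. g x = (\<Sum>S\<in>Pow {..<N}. c S * chi S x)))"

lemma degle_cong: "degle N d g \<Longrightarrow> (\<And>x. x \<in> cube N \<Longrightarrow> g x = h x) \<Longrightarrow> degle N d h"
  unfolding degle_def by metis

lemma degle_zero: "degle N d (\<lambda>x. 0)"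
  unfolding degle_def by (rule exI[of _ "\<lambda>S. 0"]) simp

lemma degle_add:
  assumes "degle N d g" "degle N d h"
  shows "degle N d (\<lambda>x. g x + h x)"
proof -
  obtain c where c: "\<forall>S. d < card S \<longrightarrow> c S = 0" "\<forall>x\<in>cube N. g x = (\<Sum>S\<in>Pow {..<N}. c S * chi S x)"
    using assms(1) unfolding degle_def by blast
  obtain c' where c': "\<forall>S. d < card S \<longrightarrow> c' S = 0" "\<forall>x\<in>cube N. h x = (\<Sum>S\<in>Pow {..<N}. c' S * chi S x)"
    using assms(2) unfolding degle_def by blast
  show ?thesis unfolding degle_def
    by (rule exI[of _ "\<lambda>S. c S + c' S"]) (simp add: c c' sum.distrib distrib_right)
qed

lemma degle_smult:
  assumes "degle N d g"
  shows "degle N d (\<lambda>x. k * g x)"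
proof -
  obtain c where c: "\<forall>S. d < card S \<longrightarrow> c S = 0" "\<forall>x\<in>cube N. g x = (\<Sum>S\<in>Pow {..<N}. c S * chi S x)"
    using assms(1) unfolding degle_def by blast
  show ?thesis unfolding degle_def
    by (rule exI[of _ "\<lambda>S. k * c S"]) (simp add: c sum_distrib_left mult.assoc)
qed

lemma degle_cnj:
  assumes "degle N d g"
  shows "degle N d (\<lambda>x. cnj (g x))"
proof -
  obtain c where c: "\<forall>S. d < card S \<longrightarrow> c S = 0" "\<forall>x\<in>cube N. g x = (\<Sum>S\<in>Pow {..<N}. c S * chi S x)"
    using assms(1) unfolding degle_def by blast
  show ?thesis unfolding degle_def
    by (rule exI[of _ "\<lambda>S. cnj (c S)"]) (simp add: c chi_real)
qed

lemma degle_sum: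
  assumes "finite A" "\<And>a. a \<in> A \<Longrightarrow> degle N d (g a)"
  shows "degle N d (\<lambda>x. \<Sum>a\<in>A. g a x)"
  using assms
proof (induction A rule: finite_induct)
  case empty
  then show ?case by (simp add: degle_zero)
next
  case (insert a A)
  then show ?case by (simp add: degle_add)
qed

lemma degle_mono: "degle N d g \<Longrightarrow> d \<le> e \<Longrightarrow> degle N e g"
  unfolding degle_def by (meson le_less_trans)

lemma degle_chi:
  assumes "R \<subseteq> {..<N}"
  shows "degle N (card R) (chi R)"
  unfolding degle_def
proof (rule exI[of _ "\<lambda>S. if S = R then 1 else 0"], intro conjI ballI allI impI)
  fix x
  have "(\<Sum>S\<in>Pow {..<N}. (if S = R then 1 else 0) * chi S x) = (\<Sum>S\<in>Pow {..<N}. if S = R then chi R x else 0)"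
    by (intro sum.cong refl) auto
  also have "\<dots> = chi R x" using assms by (simp add: sum.delta)
  finally show "chi R x = (\<Sum>S\<in>Pow {..<N}. (if S = R then 1 else 0) * chi S x)" by simp
qed auto

lemma degle_const: "degle N d (\<lambda>x. k)"
proof -
  have "degle N 0 (\<lambda>x. k * chi {} x)" using degle_smult[OF degle_chi[of "{}" N]] by simp
  then have "degle N 0 (\<lambda>x. k)" by (simp add: chi_def)
  then show ?thesis using degle_mono by blast
qed

lemma card_symdiff_le:
  assumes "finite S" "finite T"
  shows "card ((S - T) \<union> (T - S)) \<le> card S + card T"
  by (meson card_Un_le card_mono Diff_subset assms add_mono order_trans)

lemma degle_mult:
  assumes "degle N d g" "degle N e h"
  shows "degle N (d + e) (\<lambda>x. g x * h x)"
proof -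
  obtain c where c: "\<forall>S. d < card S \<longrightarrow> c S = 0" "\<forall>x\<in>cube N. g x = (\<Sum>S\<in>Pow {..<N}. c S * chi S x)"
    using assms(1) unfolding degle_def by blast
  obtain c' where c': "\<forall>S. e < card S \<longrightarrow> c' S = 0" "\<forall>x\<in>cube N. h x = (\<Sum>S\<in>Pow {..<N}. c' S * chi S x)"
    using assms(2) unfolding degle_def by blast
  have eq: "g x * h x = (\<Sum>S\<in>Pow {..<N}. \<Sum>T\<in>Pow {..<N}. (c S * c' T) * chi ((S - T) \<union> (T - S)) x)"
    if "x \<in> cube N" for x
  proof -
    have "g x * h x = (\<Sum>S\<in>Pow {..<N}. c S * chi S x) * (\<Sum>T\<in>Pow {..<N}. c' T * chi T x)"
      using that c c' by simp
    also have "\<dots> = (\<Sum>S\<in>Pow {..<N}. \<Sum>T\<in>Pow {..<N}. (c S * c' T) * (chi S x * chi T x))"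
      unfolding sum_product by (simp add: mult_ac)
    also have "\<dots> = (\<Sum>S\<in>Pow {..<N}. \<Sum>T\<in>Pow {..<N}. (c S * c' T) * chi ((S - T) \<union> (T - S)) x)"
      by (intro sum.cong refl) (simp add: chi_mult finite_subset)
    finally show ?thesis .
  qed
  have "degle N (d + e) (\<lambda>x. \<Sum>S\<in>Pow {..<N}. \<Sum>T\<in>Pow {..<N}. (c S * c' T) * chi ((S - T) \<union> (T - S)) x)"
  proof (intro degle_sum)
    fix S T assume S: "S \<in> Pow {..<N}" and T: "T \<in> Pow {..<N}"
    show "degle N (d + e) (\<lambda>x. (c S * c' T) * chi ((S - T) \<union> (T - S)) x)"
    proof (cases "card S \<le> d \<and> card T \<le> e")
      case True
      have "card ((S - T) \<union> (T - S)) \<le> d + e"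
        using card_symdiff_le[of S T] S T True finite_subset by fastforce
      moreover have "(S - T) \<union> (T - S) \<subseteq> {..<N}" using S T by auto
      ultimately show ?thesis using degle_smult degle_chi degle_mono by blast
    next
      case False
      then have "c S * c' T = 0" using c(1) c'(1) by auto
      then show ?thesis using degle_zero[of N "d + e"] by auto
    qed
  qed auto
  then show ?thesis using eq degle_cong by (metis (no_types, lifting))
qed

lemma parseval_real:
  fixes e :: "nat set \<Rightarrow> complex"
  shows "(\<Sum>x\<in>cube N. (cmod (\<Sum>S\<in>Pow {..<N}. e S * chi S x))^2) = 2 ^ N * (\<Sum>S\<in>Pow {..<N}. (cmod (e S))^2)"
proof -
  have "complex_of_real (\<Sum>x\<in>cube N. (cmod (\<Sum>S\<in>Pow {..<N}. e S * chi S x))^2)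
      = (\<Sum>x\<in>cube N. (\<Sum>S\<in>Pow {..<N}. e S * chi S x) * cnj (\<Sum>T\<in>Pow {..<N}. e T * chi T x))"
    unfolding of_real_sum complex_norm_square ..
  also have "\<dots> = 2 ^ N * (\<Sum>S\<in>Pow {..<N}. e S * cnj (e S))" by (rule parseval)
  also have "\<dots> = complex_of_real (2 ^ N * (\<Sum>S\<in>Pow {..<N}. (cmod (e S))^2))"
    unfolding of_real_mult of_real_sum complex_norm_square by simp
  finally have "complex_of_real (\<Sum>x\<in>cube N. (cmod (\<Sum>S\<in>Pow {..<N}. e S * chi S x))^2)
      = complex_of_real (2 ^ N * (\<Sum>S\<in>Pow {..<N}. (cmod (e S))^2))" .
  then show ?thesis using of_real_eq_iff by blast
qed

lemma energy:
  assumes "degle N d g"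
  shows "(\<Sum>i<N. \<Sum>x\<in>cube N. (cmod (g x - g (flip i x)))^2) \<le> 4 * real d * (\<Sum>x\<in>cube N. (cmod (g x))^2)"
proof -
  obtain c where c: "\<forall>S. d < card S \<longrightarrow> c S = 0" "\<forall>x\<in>cube N. g x = (\<Sum>S\<in>Pow {..<N}. c S * chi S x)"
    using assms(1) unfolding degle_def by blast
  define a where "a S = (cmod (c S))^2" for S
  have a0: "a S \<ge> 0" for S by (simp add: a_def)
  have diff: "g x - g (flip i x) = (\<Sum>S\<in>Pow {..<N}. (if i \<in> S then 2 * c S else 0) * chi S x)"
    if "i < N" "x \<in> cube N" for i x
  proof -
    have "g x - g (flip i x) = (\<Sum>S\<in>Pow {..<N}. c S * chi S x - c S * chi S (flip i x))"
      using c(2) that flip_cube by (simp add: sum_subtractf)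
    also have "\<dots> = (\<Sum>S\<in>Pow {..<N}. (if i \<in> S then 2 * c S else 0) * chi S x)"
      by (intro sum.cong refl) (auto simp: chi_flip finite_subset)
    finally show ?thesis .
  qed
  have "(\<Sum>i<N. \<Sum>x\<in>cube N. (cmod (g x - g (flip i x)))^2)
      = (\<Sum>i<N. 2 ^ N * (\<Sum>S\<in>Pow {..<N}. (cmod (if i \<in> S then 2 * c S else 0))^2))"
    by (intro sum.cong refl) (simp add: diff parseval_real)
  also have "\<dots> = (\<Sum>i<N. 2 ^ N * (\<Sum>S\<in>Pow {..<N}. if i \<in> S then 4 * a S else 0))"
    by (intro sum.cong refl arg_cong2[where f="(*)"]) (auto simp: a_def norm_mult power_mult_distrib)
  also have "\<dots> = 2 ^ N * (\<Sum>S\<in>Pow {..<N}. \<Sum>i<N. if i \<in> S then 4 * a S else 0)"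
    by (simp add: sum_distrib_left[symmetric] sum.swap[of _ "{..<N}"])
  also have "\<dots> = 2 ^ N * (\<Sum>S\<in>Pow {..<N}. 4 * a S * card S)"
  proof -
    have "(\<Sum>i<N. if i \<in> S then 4 * a S else 0) = 4 * a S * card S" if "S \<in> Pow {..<N}" for S
    proof -
      have "(\<Sum>i<N. if i \<in> S then 4 * a S else 0) = (\<Sum>i\<in>{..<N} \<inter> S. 4 * a S)"
        by (rule sum.inter_restrict[symmetric]) simp
      also have "{..<N} \<inter> S = S" using that by auto
      finally have "(\<Sum>i<N. if i \<in> S then 4 * a S else 0) = (\<Sum>i\<in>S. 4 * a S)" .
      then show ?thesis by (simp add: mult_ac)
    qed
    then show ?thesis by simp
  qed
  also have "\<dots> \<le> 2 ^ N * (\<Sum>S\<in>Pow {..<N}. 4 * a S * d)"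
  proof -
    have "4 * a S * card S \<le> 4 * a S * d" for S
    proof (cases "card S \<le> d")
      case True then show ?thesis using a0[of S] by (simp add: mult_left_mono)
    next
      case False then show ?thesis using c(1) by (simp add: a_def)
    qed
    then show ?thesis by (simp add: sum_mono)
  qed
  also have "\<dots> = 4 * real d * (2 ^ N * (\<Sum>S\<in>Pow {..<N}. a S))"
    by (simp add: sum_distrib_left sum_distrib_right mult_ac)
  also have "(2 ^ N * (\<Sum>S\<in>Pow {..<N}. a S)) = (\<Sum>x\<in>cube N. (cmod (g x))^2)"
    using parseval_real[of c N] c(2) by (simp add: a_def)
  finally show ?thesis .
qed



lemma finite_basis: "finite (basis_set N M)"
proof -
  have "basis_set N M \<subseteq> {..<N} \<times> {..<2} \<times> {..<M} \<times> {..<(2::nat)}"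
    by (auto simp: basis_set_def)
  then show ?thesis by (rule finite_subset) auto
qed

lemma deg_apply:
  assumes "\<forall>c\<in>basis_set N M. degle N d (\<lambda>x. \<phi> x c)"
  shows "degle N d (\<lambda>x. apply_op N M U (\<phi> x) b)"
  unfolding apply_op_def
  by (rule degle_sum[OF finite_basis]) (use assms degle_smult in blast)

lemma chi_single: "chi {i} x = (if x i then -1 else 1)"
proof -
  have "{j\<in>{i}. x j} = (if x i then {i} else {})" by auto
  then show ?thesis by (simp add: chi_def)
qed

lemma deg_query:
  assumes "\<forall>c\<in>basis_set N M. degle N d (\<lambda>x. \<psi> x c)" and b: "b \<in> basis_set N M"
  shows "degle N (d + 1) (\<lambda>x. query x (\<psi> x) b)"
proof -
  obtain i a w r where bdef: "b = (i, a, w, r)" by (cases b) auto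
  have iN: "i < N" and a2: "a < 2" using b bdef by (auto simp: basis_set_def)
  have b1: "(i, 1 - a, w, r) \<in> basis_set N M" and b2: "(i, a, w, r) \<in> basis_set N M"
    using b bdef by (auto simp: basis_set_def)
  have ci: "degle N 1 (chi {i})" using degle_chi[of "{i}" N] iN by simp
  have h1: "degle N 1 (\<lambda>x. (1/2) * (1::complex) + (-1/2) * chi {i} x)"
    by (rule degle_add[OF degle_const degle_smult[OF ci]])
  have h2: "degle N 1 (\<lambda>x. (1/2) * (1::complex) + (1/2) * chi {i} x)"
    by (rule degle_add[OF degle_const degle_smult[OF ci]])
  have "degle N (1 + d) (\<lambda>x. ((1/2) * (1::complex) + (-1/2) * chi {i} x) * \<psi> x (i, 1 - a, w, r)
      + ((1/2) * (1::complex) + (1/2) * chi {i} x) * \<psi> x (i, a, w, r))"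
    by (rule degle_add[OF degle_mult[OF h1] degle_mult[OF h2]]) (use assms b1 b2 in auto)
  then have "degle N (1 + d) (\<lambda>x. query x (\<psi> x) b)"
  proof (rule degle_cong)
    fix x
    show "((1/2) * (1::complex) + (-1/2) * chi {i} x) * \<psi> x (i, 1 - a, w, r)
      + ((1/2) * (1::complex) + (1/2) * chi {i} x) * \<psi> x (i, a, w, r) = query x (\<psi> x) b"
      by (auto simp: chi_single query_def bdef)
  qed
  then show ?thesis by (simp add: add.commute)
qed

lemma deg_run:
  "Us \<noteq> [] \<Longrightarrow> \<forall>c\<in>basis_set N M. degle N d (\<lambda>x. \<phi> x c) \<Longrightarrow> b \<in> basis_set N M
   \<Longrightarrow> degle N (d + (length Us - 1)) (\<lambda>x. run N M Us x (\<phi> x) b)"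
proof (induction Us arbitrary: d \<phi> b)
  case Nil
  then show ?case by simp
next
  case (Cons U rest)
  show ?case
  proof (cases rest)
    case Nil
    then show ?thesis using deg_apply Cons.prems by simp
  next
    case (Cons V Us')
    have q: "\<forall>c\<in>basis_set N M. degle N (d + 1) (\<lambda>x. query x (apply_op N M U (\<phi> x)) c)"
    proof
      fix c assume c: "c \<in> basis_set N M"
      have "\<forall>c\<in>basis_set N M. degle N d (\<lambda>x. apply_op N M U (\<phi> x) c)"
        using deg_apply Cons.prems(2) by blast
      then show "degle N (d + 1) (\<lambda>x. query x (apply_op N M U (\<phi> x)) c)"
        using deg_query[of N M d "\<lambda>x. apply_op N M U (\<phi> x)" c] c by blast
    qed
    have "degle N (d + 1 + (length rest - 1)) (\<lambda>x. run N M rest x (query x (apply_op N M U (\<phi> x))) b)"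
      using Cons.IH[OF _ q Cons.prems(3)] Cons by simp
    then show ?thesis using Cons by simp
  qed
qed

definition nrm :: "nat \<Rightarrow> nat \<Rightarrow> qstate \<Rightarrow> real" where
  "nrm N M \<psi> = (\<Sum>b\<in>basis_set N M. (cmod (\<psi> b))^2)"

lemma nrm_query: "nrm N M (query x \<psi>) = nrm N M \<psi>"
proof -
  define h where "h = (\<lambda>(i::nat, a::nat, w::nat, r::nat). (i, if x i then 1 - a else a, w, r))"
  have hh: "b \<in> basis_set N M \<Longrightarrow> h (h b) = b" for b
    by (auto simp: h_def basis_set_def)
  have hB: "b \<in> basis_set N M \<Longrightarrow> h b \<in> basis_set N M" for b
    by (auto simp: h_def basis_set_def)
  have qh: "query x \<psi> b = \<psi> (h b)" for b
    by (cases b) (simp add: query_def h_def)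
  have "(\<Sum>b\<in>basis_set N M. (cmod (\<psi> (h b)))^2) = (\<Sum>b\<in>basis_set N M. (cmod (\<psi> b))^2)"
    by (rule sum.reindex_bij_witness[of _ h h]) (auto simp: hh hB)
  then show ?thesis by (simp add: nrm_def qh)
qed

lemma nrm_apply:
  assumes "unitary_op N M U"
  shows "nrm N M (apply_op N M U \<psi>) = nrm N M \<psi>"
proof -
  let ?B = "basis_set N M"
  have u: "(\<Sum>b\<in>?B. cnj (U b d) * U b c) = (if d = c then 1 else 0)" if "c \<in> ?B" "d \<in> ?B" for c d
    using assms that unfolding unitary_op_def by blast
  have "complex_of_real (nrm N M (apply_op N M U \<psi>))
     = (\<Sum>b\<in>?B. (\<Sum>c\<in>?B. U b c * \<psi> c) * cnj (\<Sum>d\<in>?B. U b d * \<psi> d))"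
    unfolding nrm_def apply_op_def of_real_sum complex_norm_square ..
  also have "\<dots> = (\<Sum>b\<in>?B. \<Sum>c\<in>?B. \<Sum>d\<in>?B. (\<psi> c * cnj (\<psi> d)) * (cnj (U b d) * U b c))"
    unfolding sum_product cnj_sum by (simp add: sum_distrib_left mult_ac)
  also have "\<dots> = (\<Sum>c\<in>?B. \<Sum>d\<in>?B. \<Sum>b\<in>?B. (\<psi> c * cnj (\<psi> d)) * (cnj (U b d) * U b c))"
    by (subst sum.swap) (rule sum.cong[OF refl], rule sum.swap)
  also have "\<dots> = (\<Sum>c\<in>?B. \<Sum>d\<in>?B. (\<psi> c * cnj (\<psi> d)) * (if d = c then 1 else 0))"
    by (intro sum.cong refl) (simp add: sum_distrib_left[symmetric] u)
  also have "\<dots> = (\<Sum>c\<in>?B. \<psi> c * cnj (\<psi> c))"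
    by (intro sum.cong refl) (simp add: if_distrib sum.delta finite_basis cong: if_cong)
  also have "\<dots> = complex_of_real (nrm N M \<psi>)"
    unfolding nrm_def of_real_sum complex_norm_square ..
  finally show ?thesis using of_real_eq_iff by blast
qed

lemma nrm_run:
  "\<forall>U\<in>set Us. unitary_op N M U \<Longrightarrow> nrm N M (run N M Us x \<psi>) = nrm N M \<psi>"
  by (induction N M Us x \<psi> rule: run.induct) (simp_all add: nrm_apply nrm_query)



lemma card_filter_sum:
  assumes "finite A"
  shows "real (card {x\<in>A. P x}) = (\<Sum>x\<in>A. if P x then 1 else 0)"
proof -
  have "(\<Sum>x\<in>{x\<in>A. P x}. (1::real)) = (\<Sum>x\<in>A. if P x then 1 else 0)"
    by (rule sum.inter_filter[OF assms])
  then show ?thesis by simp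
qed

lemma double_count:
  fixes Q :: "(nat \<Rightarrow> bool) \<Rightarrow> nat \<Rightarrow> bool"
  shows "(\<Sum>x\<in>cube N. real (card {i. i < N \<and> Q x i})) = (\<Sum>i<N. real (card {x\<in>cube N. Q x i}))"
proof -
  have "(\<Sum>x\<in>cube N. real (card {i. i < N \<and> Q x i})) = (\<Sum>x\<in>cube N. \<Sum>i<N. if Q x i then 1 else 0)"
  proof (intro sum.cong refl)
    fix x
    have "{i. i < N \<and> Q x i} = {i\<in>{..<N}. Q x i}" by auto
    then show "real (card {i. i < N \<and> Q x i}) = (\<Sum>i<N. if Q x i then 1 else 0)"
      using card_filter_sum[of "{..<N}" "Q x"] by simp
  qed
  also have "\<dots> = (\<Sum>i<N. \<Sum>x\<in>cube N. if Q x i then 1 else 0)" by (rule sum.swap)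
  also have "\<dots> = (\<Sum>i<N. real (card {x\<in>cube N. Q x i}))"
    by (intro sum.cong refl) (simp add: card_filter_sum finite_cube)
  finally show ?thesis .
qed

lemma key_ineq:
  fixes e :: real
  assumes "0 \<le> e" "e \<le> 1/4"
  shows "1 - 2 * sqrt e \<le> (1 - 2 * e)^2"
proof -
  define s where "s = sqrt e"
  have s0: "0 \<le> s" and es: "e = s^2" using assms by (auto simp: s_def)
  have "s \<le> 1/2"
  proof -
    have "sqrt e \<le> sqrt (1/4)" using assms by simp
    also have "sqrt (1/4) = (1/2::real)" by (simp add: real_sqrt_divide)
    finally show ?thesis by (simp add: s_def)
  qed
  moreover have "0 \<le> s * s * s" using s0 by simp
  ultimately have h: "0 \<le> 2 * s^3 - 2 * s + 1" by (simp add: power3_eq_cube)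
  have "(1 - 2 * e)^2 - (1 - 2 * s) = 2 * s * (2 * s^3 - 2 * s + 1)"
    by (simp add: es power2_eq_square power3_eq_cube algebra_simps)
  also have "\<dots> \<ge> 0" using h s0 by simp
  finally show ?thesis by (simp add: s_def)
qed

theorem theorem3:
  fixes N M T :: nat and f :: "(nat \<Rightarrow> bool) \<Rightarrow> int" and Us :: "qop list"
    and b0 :: basis and \<epsilon> :: real
  assumes "N \<ge> 1"
    and "\<forall>x\<in>cube N. f x \<in> {-1, 1}"
    and "0 \<le> \<epsilon>"
    and "b0 \<in> basis_set N M"
    and "\<forall>U\<in>set Us. unitary_op N M U"
    and "length Us = T + 1"
    and "computes_with_error N M Us b0 f \<epsilon>"
  shows "real T \<ge> (1 - 2 * sqrt \<epsilon>) / 2 * avg_influence N f * real N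
    \<and> (1 - 2 * sqrt \<epsilon>) / 2 * avg_influence N f * real N
        = (1 - 2 * sqrt \<epsilon>) / 2 * avg_sensitivity N f"
proof -
  let ?B = "basis_set N M"
  define K where "K = (\<Sum>i<N. real (card {x\<in>cube N. f x \<noteq> f (flip i x)}))"
  define I where "I = K / 2 ^ N"
  have K0: "K \<ge> 0" unfolding K_def by (simp add: sum_nonneg)
  have "avg_influence N f * real N = (\<Sum>i<N. influence N f i) / real N * real N"
    unfolding avg_influence_def ..
  also have "\<dots> = (\<Sum>i<N. influence N f i)" using assms(1) by simp
  also have "\<dots> = I" by (simp add: influence_def I_def K_def sum_divide_distrib)
  finally have AI: "avg_influence N f * real N = I" .
  have AS: "avg_sensitivity N f = I"
    unfolding avg_sensitivity_def sensitivity_def I_def K_def by (simp add: double_count)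
  have I0: "I \<ge> 0" using K0 by (simp add: I_def)
  have part2: "(1 - 2 * sqrt \<epsilon>) / 2 * avg_influence N f * real N
        = (1 - 2 * sqrt \<epsilon>) / 2 * avg_sensitivity N f"
    using AI AS by (simp add: mult.assoc)
  have part1: "(1 - 2 * sqrt \<epsilon>) / 2 * I \<le> real T"
  proof (cases "\<epsilon> \<le> 1/4")
    case False
    then have "sqrt (1/4) < sqrt \<epsilon>" by simp
    moreover have "sqrt (1/4) = (1/2::real)" by (simp add: real_sqrt_divide)
    ultimately have "1 - 2 * sqrt \<epsilon> \<le> 0" by simp
    then have "(1 - 2 * sqrt \<epsilon>) / 2 * I \<le> 0" using I0 by (simp add: mult_nonpos_nonneg)
    then show ?thesis by simp
  next
    case True
    define \<psi> where "\<psi> x = run N M Us x (basis_state b0)" for x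
    have Une: "Us \<noteq> []" using assms(6) by auto
    have deg\<psi>: "degle N T (\<lambda>x. \<psi> x b)" if "b \<in> ?B" for b
      using deg_run[OF Une, of N M 0 "\<lambda>x. basis_state b0" b] that assms(6)
      by (simp add: degle_const \<psi>_def)
    have nbe: "(\<lambda>b. (cmod (basis_state b0 b))^2) = (\<lambda>b. if b = b0 then 1 else 0)"
      by (auto simp: basis_state_def fun_eq_iff)
    have nb: "nrm N M (basis_state b0) = 1"
      unfolding nrm_def nbe using assms(4) by (simp add: sum.delta finite_basis)
    have n1: "nrm N M (\<psi> x) = 1" for x
      using nrm_run[OF assms(5)] nb by (simp add: \<psi>_def)
    define C where "C = {b::basis. snd (snd (snd b)) = 0}"
    define p0 where "p0 x = (\<Sum>b\<in>?B \<inter> C. (cmod (\<psi> x b))^2)" for x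
    define p1 where "p1 x = (\<Sum>b\<in>?B - C. (cmod (\<psi> x b))^2)" for x
    have e0: "{b\<in>?B. snd (snd (snd b)) = 0} = ?B \<inter> C" by (auto simp: C_def)
    have e1: "{b\<in>?B. snd (snd (snd b)) = 1} = ?B - C" by (auto simp: C_def basis_set_def)
    have P0: "prob_result N M Us b0 x 0 = p0 x" for x
      unfolding prob_result_def e0 p0_def \<psi>_def ..
    have P1: "prob_result N M Us b0 x 1 = p1 x" for x
      unfolding prob_result_def e1 p1_def \<psi>_def ..
    have p01: "p0 x + p1 x = 1" for x
      using n1[of x] sum.Int_Diff[OF finite_basis, of "\<lambda>b. (cmod (\<psi> x b))^2" N M C]
      by (simp add: nrm_def p0_def p1_def)
    have p0nn: "p0 x \<ge> 0" for x by (simp add: p0_def sum_nonneg)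
    have p1nn: "p1 x \<ge> 0" for x by (simp add: p1_def sum_nonneg)
    define s where "s b = (if b \<in> C then 1 else -1::real)" for b
    define q where "q x = (\<Sum>b\<in>?B. complex_of_real (s b) * (\<psi> x b * cnj (\<psi> x b)))" for x
    have degq: "degle N (T + T) q"
      unfolding q_def
      by (intro degle_sum finite_basis degle_smult degle_mult degle_cnj deg\<psi>)
    have qr: "q x = complex_of_real (p0 x - p1 x)" for x
    proof -
      have "q x = complex_of_real (\<Sum>b\<in>?B. s b * (cmod (\<psi> x b))^2)"
        unfolding q_def of_real_sum of_real_mult complex_norm_square ..
      also have "(\<Sum>b\<in>?B. s b * (cmod (\<psi> x b))^2)
          = (\<Sum>b\<in>?B \<inter> C. s b * (cmod (\<psi> x b))^2) + (\<Sum>b\<in>?B - C. s b * (cmod (\<psi> x b))^2)"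
        by (rule sum.Int_Diff[OF finite_basis])
      also have "\<dots> = p0 x - p1 x"
        by (simp add: p0_def p1_def s_def sum_negf)
      finally show ?thesis .
    qed
    have qb: "(cmod (q x))^2 \<le> 1" for x
    proof -
      have "\<bar>p0 x - p1 x\<bar> \<le> 1" using p01[of x] p0nn[of x] p1nn[of x] by linarith
      then have "\<bar>p0 x - p1 x\<bar>^2 \<le> 1" by (intro power_le_one) auto
      moreover have "cmod (q x) = \<bar>p0 x - p1 x\<bar>" unfolding qr by (simp only: norm_of_real)
      ultimately show ?thesis by simp
    qed
    have s1: "(\<Sum>x\<in>cube N. (cmod (q x))^2) \<le> 2 ^ N"
      using sum_mono[of "cube N" "\<lambda>x. (cmod (q x))^2" "\<lambda>x. 1", OF qb] card_cube by simp
    have "4 * real (T + T) * (\<Sum>x\<in>cube N. (cmod (q x))^2) \<le> 4 * real (T + T) * 2 ^ N"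
      by (rule mult_left_mono[OF s1]) simp
    then have energyq: "(\<Sum>i<N. \<Sum>x\<in>cube N. (cmod (q x - q (flip i x)))^2) \<le> 8 * real T * 2 ^ N"
      using energy[OF degq] by simp
    have c: "\<forall>x\<in>cube N. prob_result N M Us b0 x (if f x = 1 then 0 else 1) \<ge> 1 - \<epsilon>"
      using assms(7) computes_with_error_def by blast
    have sens: "(2 - 4 * \<epsilon>)^2 \<le> (cmod (q x - q (flip i x)))^2"
      if "i < N" "x \<in> cube N" "f x \<noteq> f (flip i x)" for i x
    proof -
      let ?y = "flip i x"
      have y: "?y \<in> cube N" using flip_cube that by blast
      have fx: "f x \<in> {-1,1}" "f ?y \<in> {-1,1}" using assms(2) that(2) y by auto
      have cx: "prob_result N M Us b0 x (if f x = 1 then 0 else 1) \<ge> 1 - \<epsilon>" using c that(2) by blast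
      have cy: "prob_result N M Us b0 ?y (if f ?y = 1 then 0 else 1) \<ge> 1 - \<epsilon>" using c y by blast
      have d: "2 - 4 * \<epsilon> \<le> \<bar>(p0 x - p1 x) - (p0 ?y - p1 ?y)\<bar>"
      proof (cases "f x = 1")
        case True
        then have "f ?y \<noteq> 1" using that(3) by simp
        then have "p0 x \<ge> 1 - \<epsilon>" "p1 ?y \<ge> 1 - \<epsilon>" using cx cy True P0 P1 by auto
        moreover have "(p0 x - p1 x) - (p0 ?y - p1 ?y) \<le> \<bar>(p0 x - p1 x) - (p0 ?y - p1 ?y)\<bar>" by (rule abs_ge_self)
        ultimately show ?thesis using p01[of x] p01[of ?y] by linarith
      next
        case False
        then have "f ?y = 1" using that(3) fx by auto
        then have "p1 x \<ge> 1 - \<epsilon>" "p0 ?y \<ge> 1 - \<epsilon>" using cx cy False P0 P1 by auto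
        moreover have "- ((p0 x - p1 x) - (p0 ?y - p1 ?y)) \<le> \<bar>(p0 x - p1 x) - (p0 ?y - p1 ?y)\<bar>" by (rule abs_ge_minus_self)
        ultimately show ?thesis using p01[of x] p01[of ?y] by linarith
      qed
      have "0 \<le> 2 - 4 * \<epsilon>" using True by simp
      from power_mono[OF d this, of 2]
      have "(2 - 4 * \<epsilon>)^2 \<le> \<bar>(p0 x - p1 x) - (p0 ?y - p1 ?y)\<bar>^2" .
      moreover have "q x - q ?y = complex_of_real ((p0 x - p1 x) - (p0 ?y - p1 ?y))" by (simp add: qr)
      ultimately show ?thesis by (simp only: norm_of_real)
    qed
    have ifm: "c * (if P then 1 else 0) = (if P then c else 0)" for c :: real and P by simp
    have "(2 - 4 * \<epsilon>)^2 * K = (\<Sum>i<N. \<Sum>x\<in>cube N. (2 - 4 * \<epsilon>)^2 * (if f x \<noteq> f (flip i x) then 1 else 0))"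
      unfolding K_def by (simp add: sum_distrib_left card_filter_sum finite_cube)
    also have "\<dots> = (\<Sum>i<N. \<Sum>x\<in>cube N. if f x \<noteq> f (flip i x) then (2 - 4 * \<epsilon>)^2 else 0)"
      unfolding ifm ..
    also have "\<dots> \<le> (\<Sum>i<N. \<Sum>x\<in>cube N. (cmod (q x - q (flip i x)))^2)"
      by (intro sum_mono) (auto simp: sens)
    also have "\<dots> \<le> 8 * real T * 2 ^ N" by (rule energyq)
    finally have "(2 - 4 * \<epsilon>)^2 * K \<le> 8 * real T * 2 ^ N" .
    moreover have "K = I * 2 ^ N" by (simp add: I_def)
    moreover have "(2 - 4 * \<epsilon>)^2 = 4 * (1 - 2 * \<epsilon>)^2" by (simp add: power2_eq_square algebra_simps)
    ultimately have "(4 * ((1 - 2 * \<epsilon>)^2 * I)) * 2 ^ N \<le> (4 * (2 * real T)) * 2 ^ N"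
      by (simp add: mult_ac)
    then have m: "(1 - 2 * \<epsilon>)^2 * I \<le> 2 * real T"
      by (simp add: mult_le_cancel_right_pos mult.commute)
    have "(1 - 2 * sqrt \<epsilon>) * I \<le> (1 - 2 * \<epsilon>)^2 * I"
      by (rule mult_right_mono[OF key_ineq[OF assms(3) True] I0])
    then show ?thesis using m by simp
  qed
  have "(1 - 2 * sqrt \<epsilon>) / 2 * avg_influence N f * real N = (1 - 2 * sqrt \<epsilon>) / 2 * I"
    using AI by (simp only: mult.assoc)
  then have "(1 - 2 * sqrt \<epsilon>) / 2 * avg_influence N f * real N \<le> real T"
    using part1 by (rule ord_eq_le_trans)
  then show ?thesis using part2 by (intro conjI)
qed

end
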